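(* Let $v_1,\ldots,v_k$ be unit vectors in $\mathbb{R}^n$ for some $k \in \mathbb{N}$, and let $S = \mathrm{span}\lbrace v_1,\ldots,v_k\rbrace$. Let $\mathcal{F}$ denote the set of all matrices $F$ whose columns are the vectors of a maximal linearly independent subset $\lbrace f_1,\ldots,f_r\rbrace \subset \lbrace v_1,\ldots,v_k\rbrace$. Let $Q = (I - v_kv_k')(I - v_{k-1}v_{k-1}')\cdots(I - v_1v_1')$. Then $$\sup_{y \in S,\ \|y\|_2 = 1} \|Qy\|_2 \leq \sqrt{1 - \min_{F\in\mathcal{F}} \det(F'F)}.$$
   Context: $'$ denotes transpose; $I$ is the $n\times n$ identity. *)

theory Defs
  imports "HOL-Analysis.Analysis" "Jordan_Normal_Form.Determinant"
begin

definition outer_sq :: "real^'n \<Rightarrow> real^'n^'n" where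
  "outer_sq v = (\<chi> i j. v $ i * v $ j)"

text \<open>Q_m = (I - v_m v_m')(I - v_(m-1) v_(m-1)') ... (I - v_1 v_1'); vectors indexed from 1.\<close>
fun Qprod :: "(nat \<Rightarrow> real^'n) \<Rightarrow> nat \<Rightarrow> real^'n^'n" where
  "Qprod v 0 = Finite_Cartesian_Product.mat 1"
| "Qprod v (Suc m) = (Finite_Cartesian_Product.mat 1 - outer_sq (v (Suc m))) ** Qprod v m"

text \<open>For a matrix F with columns fs!0,...,fs!(r-1), the r x r matrix F'F (entries (fs!i) . (fs!j)),
  and its determinant.\<close>
definition gram_mat :: "(real^'n) list \<Rightarrow> real Matrix.mat" where
  "gram_mat fs = Matrix.mat (length fs) (length fs) (\<lambda>(i,j). inner (fs ! i) (fs ! j))"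

definition gram_det :: "(real^'n) list \<Rightarrow> real" where
  "gram_det fs = Determinant.det (gram_mat fs)"

text \<open>fs lists (without repetition) the columns of a matrix F whose columns form a maximal
  linearly independent subset of the set V.\<close>
definition max_indep_cols :: "(real^'n) set \<Rightarrow> (real^'n) list \<Rightarrow> bool" where
  "max_indep_cols V fs \<longleftrightarrow> distinct fs \<and> set fs \<subseteq> V \<and> independent (set fs) \<and>
     (\<forall>x\<in>V. x \<notin> set fs \<longrightarrow> dependent (insert x (set fs)))"

end

theory Submission
  imports Defs
begin

lemma gram_transform:
  fixes ws :: "(real^'n) list" and E :: "real Matrix.mat"
  assumes E: "E \<in> carrier_mat m m" and len: "length ws = m"
  shows "gram_mat (map (\<lambda>j. \<Sum>k<m. E $$ (k,j) *\<^sub>R ws!k) [0..<m])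
         = transpose_mat E * gram_mat ws * E"
proof (rule eq_matI)
  show "dim_row (gram_mat (map (\<lambda>j. \<Sum>k<m. E $$ (k,j) *\<^sub>R ws!k) [0..<m])) = dim_row (transpose_mat E * gram_mat ws * E)"
    using E len by (simp add: gram_mat_def)
  show "dim_col (gram_mat (map (\<lambda>j. \<Sum>k<m. E $$ (k,j) *\<^sub>R ws!k) [0..<m])) = dim_col (transpose_mat E * gram_mat ws * E)"
    using E len by (simp add: gram_mat_def)
  fix i j assume i: "i < dim_row (transpose_mat E * gram_mat ws * E)" and j: "j < dim_col (transpose_mat E * gram_mat ws * E)"
  then have im: "i < m" and jm: "j < m" using E by auto
  have "(transpose_mat E * gram_mat ws * E) $$ (i,j) = (\<Sum>l<m. (\<Sum>k<m. E $$ (k,i) * inner (ws!k) (ws!l)) * E $$ (l,j))"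
    using E len im jm by (simp add: gram_mat_def scalar_prod_def Matrix.row_def col_def atLeast0LessThan)
  also have "\<dots> = inner (\<Sum>k<m. E $$ (k,i) *\<^sub>R ws!k) (\<Sum>l<m. E $$ (l,j) *\<^sub>R ws!l)"
    by (simp add: inner_sum_left inner_sum_right sum_distrib_left sum_distrib_right mult_ac)
  finally show "gram_mat (map (\<lambda>j. \<Sum>k<m. E $$ (k,j) *\<^sub>R ws!k) [0..<m]) $$ (i,j) = (transpose_mat E * gram_mat ws * E) $$ (i,j)"
    using im jm by (simp add: gram_mat_def)
qed

lemma det_one_one: "Determinant.det (Matrix.mat 1 1 (\<lambda>_. c)) = (c::real)"
  by (subst det_upper_triangular[of _ 1]) (auto simp: upper_triangular_def diag_mat_def)

lemma gram_det_orth_snoc: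
  fixes fs :: "(real^'n) list"
  assumes orth: "\<forall>f\<in>set fs. inner q f = 0"
  shows "gram_det (fs @ [q]) = gram_det fs * inner q q"
proof -
  let ?r = "length fs"
  have "gram_mat (fs @ [q]) = four_block_mat (gram_mat fs) (0\<^sub>m ?r 1) (0\<^sub>m 1 ?r) (Matrix.mat 1 1 (\<lambda>_. inner q q))"
  proof -
    have o: "\<And>j. j < ?r \<Longrightarrow> inner q (fs!j) = 0 \<and> inner (fs!j) q = 0"
      using orth nth_mem by (metis inner_commute)
    show ?thesis using o by (auto intro!: eq_matI simp: gram_mat_def nth_append)
  qed
  then have "gram_det (fs @ [q]) = Determinant.det (gram_mat fs) * Determinant.det (Matrix.mat 1 1 (\<lambda>_. inner q q))"
    unfolding gram_det_def
    by (simp only:) (rule det_four_block_mat_lower_left_zero, auto simp: gram_mat_def)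
  then show ?thesis by (simp only: det_one_one gram_det_def)
qed


lemma gram_det_snoc:
  fixes fs :: "(real^'n) list"
  assumes dist: "distinct fs" and p: "p \<in> span (set fs)" and orth: "\<forall>f\<in>set fs. inner q f = 0"
  shows "gram_det (fs @ [p + q]) = gram_det fs * inner q q"
proof -
  let ?r = "length fs"
  obtain u where pu: "p = (\<Sum>x\<in>set fs. u x *\<^sub>R x)"
    using p span_finite[of "set fs"] by auto
  have pu2: "p = (\<Sum>k<?r. u (fs!k) *\<^sub>R fs!k)"
  proof -
    have "set fs = (!) fs ` {..<?r}" by (simp add: set_conv_nth image_def) blast
    then have "(\<Sum>x\<in>set fs. u x *\<^sub>R x) = (\<Sum>k\<in>{..<?r}. u (fs!k) *\<^sub>R fs!k)"
      using sum.reindex[OF inj_on_nth[OF dist, of "{..<?r}"], of "\<lambda>x. u x *\<^sub>R x"] by simp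
    then show ?thesis using pu by simp
  qed
  define E where "E = Matrix.mat (?r+1) (?r+1) (\<lambda>(i,j). if i = j then 1 else if j = ?r then u (fs!i) else (0::real))"
  let ?ws = "fs @ [q]"
  have Ec: "E \<in> carrier_mat (?r+1) (?r+1)" by (simp add: E_def)
  have map_eq: "map (\<lambda>j. \<Sum>k<?r+1. E $$ (k,j) *\<^sub>R ?ws!k) [0..<?r+1] = fs @ [p + q]"
  proof (rule nth_equalityI)
    show "length (map (\<lambda>j. \<Sum>k<?r+1. E $$ (k,j) *\<^sub>R ?ws!k) [0..<?r+1]) = length (fs @ [p + q])" by simp
    fix j assume "j < length (map (\<lambda>j. \<Sum>k<?r+1. E $$ (k,j) *\<^sub>R ?ws!k) [0..<?r+1])"
    then have j: "j < ?r + 1" by simp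
    show "map (\<lambda>j. \<Sum>k<?r+1. E $$ (k,j) *\<^sub>R ?ws!k) [0..<?r+1] ! j = (fs @ [p + q]) ! j"
    proof (cases "j = ?r")
      case True
      have "(\<Sum>k<?r+1. E $$ (k,j) *\<^sub>R ?ws!k) = (\<Sum>k<?r. E $$ (k,j) *\<^sub>R ?ws!k) + E $$ (?r,j) *\<^sub>R ?ws!?r"
        by simp
      also have "\<dots> = p + q" using True by (simp add: E_def pu2 nth_append)
      finally show ?thesis using True by (simp add: nth_append del: upt_Suc)
    next
      case False
      then have jr: "j < ?r" using j by simp
      have "(\<Sum>k<?r+1. E $$ (k,j) *\<^sub>R ?ws!k) = (\<Sum>k<?r+1. (if k = j then ?ws!k else 0))"
        by (rule sum.cong) (use jr in \<open>auto simp: E_def\<close>)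
      also have "\<dots> = ?ws ! j" using j by simp
      finally show ?thesis using jr by (simp add: nth_append del: upt_Suc)
    qed
  qed
  have dg: "diag_mat E = map (\<lambda>_. 1) [0..<?r+1]"
    unfolding diag_mat_def by (rule map_cong) (auto simp: E_def)
  have detE: "Determinant.det E = 1"
    apply (subst det_upper_triangular[OF _ Ec])
     apply (auto simp: upper_triangular_def E_def)[1]
    apply (simp only: dg map_replicate_const)
    by simp
  have "gram_det (fs @ [p + q]) = Determinant.det (transpose_mat E * gram_mat ?ws * E)"
    unfolding gram_det_def using gram_transform[OF Ec, of ?ws] map_eq by simp
  also have "\<dots> = Determinant.det (transpose_mat E) * Determinant.det (gram_mat ?ws) * Determinant.det E"
    using Ec by (simp add: det_mult[of _ "?r+1"] gram_mat_def)
  also have "\<dots> = gram_det ?ws" using detE det_transpose[OF Ec] by (simp add: gram_det_def)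
  finally show ?thesis using gram_det_orth_snoc[OF orth] by simp
qed
lemma scalar_key:
  fixes A2 U2 L s2 d g :: real
  assumes g0: "0 \<le> g" and g1: "g \<le> 1" and s0: "0 \<le> s2" and s1: "s2 \<le> 1"
    and A0: "0 \<le> A2" and U0: "0 \<le> U2" and AU: "A2 \<le> (1 - g) * U2" and dA: "d^2 \<le> (1 - s2) * A2"
  shows "A2 + L^2 * s2 - (d + L * s2)^2 \<le> (1 - g * s2) * (U2 + L^2 * s2)"
proof (cases "g = 1")
  case True
  then have "A2 = 0" using AU A0 by simp
  then have "d = 0" using dA by simp
  have "(1 - s2) * U2 \<ge> 0" using U0 s1 by simp
  then show ?thesis using True \<open>A2 = 0\<close> \<open>d = 0\<close> by (simp add: algebra_simps power2_eq_square)
next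
  case False
  define c where "c = 1 - g"
  have c0: "0 < c" using False g1 c_def by simp
  have c1: "c \<le> 1" using g0 c_def by simp
  have id: "c * (d + L * s2)^2 + (1 - c) * d^2 - c * (1 - c) * (L * s2)^2 = (d + c * (L * s2))^2"
    by (simp add: power2_eq_square algebra_simps)
  have k1: "c * (d + L * s2)^2 \<ge> c * (1 - c) * (L * s2)^2 - (1 - c) * d^2"
    using id zero_le_power2[of "d + c * (L * s2)"] by linarith
  have k2: "(1 - c) * d^2 \<le> (1 - c) * ((1 - s2) * A2)"
    using dA c1 by (simp add: mult_left_mono)
  have k3: "c * ((1 - s2 + c * s2) * U2) \<ge> (1 - s2 + c * s2) * A2"
  proof -
    have "0 \<le> 1 - s2 + c * s2" using s1 s0 c0 by simp
    then have "(1 - s2 + c * s2) * A2 \<le> (1 - s2 + c * s2) * (c * U2)"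
      using AU c_def by (simp add: mult_left_mono)
    then show ?thesis by (simp add: algebra_simps)
  qed
  have "c * ((1 - g * s2) * (U2 + L^2 * s2) - (A2 + L^2 * s2 - (d + L * s2)^2)) =
        c * ((1 - s2 + c * s2) * U2) - c * (1 - c) * (L * s2)^2 - c * A2 + c * (d + L * s2)^2"
    by (simp add: c_def power2_eq_square algebra_simps)
  also have "\<dots> \<ge> (1 - s2 + c * s2) * A2 - c * A2 - (1 - c) * ((1 - s2) * A2)"
    using k1 k2 k3 by linarith
  also have "(1 - s2 + c * s2) * A2 - c * A2 - (1 - c) * ((1 - s2) * A2) = 0"
    by (simp add: algebra_simps)
  finally have "0 \<le> c * ((1 - g * s2) * (U2 + L^2 * s2) - (A2 + L^2 * s2 - (d + L * s2)^2))" .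
  then show ?thesis using c0 by (simp add: zero_le_mult_iff)
qed

lemma outer_apply: "outer_sq w *v x = (inner w x) *\<^sub>R (w::real^'n)"
  by (simp add: Finite_Cartesian_Product.vec_eq_iff outer_sq_def matrix_vector_mult_def inner_vec_def sum_distrib_left sum_distrib_right mult_ac)

lemma P_apply: "(Finite_Cartesian_Product.mat 1 - outer_sq w) *v x = x - (inner w x) *\<^sub>R (w::real^'n)"
  by (simp add: matrix_vector_mult_diff_rdistrib outer_apply)

lemma P_norm2:
  fixes w x :: "real^'n"
  assumes "norm w = 1"
  shows "(norm (x - (inner w x) *\<^sub>R w))^2 = (norm x)^2 - (inner w x)^2"
proof -
  have ww: "inner w w = 1" using assms by (simp add: dot_square_norm)
  show ?thesis
    unfolding power2_norm_eq_inner by (simp add: inner_diff_left inner_diff_right ww inner_commute power2_eq_square)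
qed

lemma Qprod_Suc_apply: "Qprod v (Suc m) *v x = Qprod v m *v x - inner (v (Suc m)) (Qprod v m *v x) *\<^sub>R v (Suc m)"
  by (simp add: matrix_vector_mul_assoc[symmetric] P_apply)

lemma Qprod_span:
  assumes "\<forall>i\<in>{1..m}. v i \<in> span T" and "x \<in> span T"
  shows "Qprod v m *v x \<in> span T"
  using assms
proof (induction m)
  case 0 then show ?case by simp
next
  case (Suc m)
  then have a: "Qprod v m *v x \<in> span T" by auto
  have "v (Suc m) \<in> span T" using Suc.prems by auto
  then show ?case unfolding Qprod_Suc_apply using a by (intro span_diff span_scale) auto
qed

lemma Qprod_fix:
  assumes "\<forall>i\<in>{1..m}. inner (v i) z = 0"
  shows "Qprod v m *v z = z"
  using assms
proof (induction m)
  case 0 then show ?case by simp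
next
  case (Suc m)
  then show ?case unfolding Qprod_Suc_apply by auto
qed

lemma Qprod_linear: "Qprod v m *v (a + c *\<^sub>R b) = Qprod v m *v a + c *\<^sub>R (Qprod v m *v b)"
  by (simp add: matrix_vector_right_distrib matrix_vector_mult_scaleR)


lemma main_ind:
  fixes v :: "nat \<Rightarrow> real^'n"
  assumes "\<forall>i\<in>{1..k}. norm (v i) = 1"
  shows "\<exists>fs. distinct fs \<and> set fs \<subseteq> v ` {1..k} \<and> independent (set fs) \<and>
     v ` {1..k} \<subseteq> span (set fs) \<and> 0 \<le> gram_det fs \<and> gram_det fs \<le> 1 \<and>
     (\<forall>y \<in> span (v ` {1..k}). (norm (Qprod v k *v y))^2 \<le> (1 - gram_det fs) * (norm y)^2)"
  using assms
proof (induction k)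
  case 0
  have "gram_det ([] :: (real^'n) list) = 1" by (simp add: gram_det_def gram_mat_def)
  then show ?case by (intro exI[of _ "[]"]) (auto simp: independent_empty)
next
  case (Suc k)
  let ?V = "v ` {1..k}"
  let ?w = "v (Suc k)"
  have wn: "norm ?w = 1" using Suc.prems by simp
  have pr: "\<forall>i\<in>{1..k}. norm (v i) = 1" using Suc.prems by simp
  obtain fs where d: "distinct fs" and sub: "set fs \<subseteq> ?V" and ind: "independent (set fs)"
    and cov: "?V \<subseteq> span (set fs)" and g0: "0 \<le> gram_det fs" and g1: "gram_det fs \<le> 1"
    and IH: "\<forall>y \<in> span ?V. (norm (Qprod v k *v y))^2 \<le> (1 - gram_det fs) * (norm y)^2"
    using Suc.IH[OF pr] by blast
  have spV: "span ?V = span (set fs)"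
  proof (rule subset_antisym)
    show "span ?V \<subseteq> span (set fs)" by (rule span_minimal[OF cov subspace_span])
    show "span (set fs) \<subseteq> span ?V" using sub by (rule span_mono)
  qed
  have V'eq: "v ` {1..Suc k} = insert ?w ?V" by (auto simp: atLeastAtMostSuc_conv)
  have Qsp: "\<And>x. x \<in> span ?V \<Longrightarrow> Qprod v k *v x \<in> span ?V"
    by (rule Qprod_span) (auto intro: span_base)
  show ?case
  proof (cases "?w \<in> span (set fs)")
    case True
    have spV': "span (v ` {1..Suc k}) = span ?V"
      unfolding V'eq using True spV by (simp add: span_redundant)
    show ?thesis
    proof (intro exI[of _ fs] conjI ballI)
      show "distinct fs" by fact
      show "set fs \<subseteq> v ` {1..Suc k}" using sub V'eq by auto
      show "independent (set fs)" by fact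
      show "v ` {1..Suc k} \<subseteq> span (set fs)" using cov True V'eq by auto
      show "0 \<le> gram_det fs" "gram_det fs \<le> 1" by fact+
      fix y assume "y \<in> span (v ` {1..Suc k})"
      then have y: "y \<in> span ?V" using spV' by simp
      have "(norm (Qprod v (Suc k) *v y))^2 = (norm (Qprod v k *v y))^2 - (inner ?w (Qprod v k *v y))^2"
        unfolding Qprod_Suc_apply using P_norm2[OF wn] by simp
      also have "\<dots> \<le> (norm (Qprod v k *v y))^2" by simp
      also have "\<dots> \<le> (1 - gram_det fs) * (norm y)^2" using IH y by simp
      finally show "(norm (Qprod v (Suc k) *v y))^2 \<le> (1 - gram_det fs) * (norm y)^2" .
    qed
  next
    case False
    obtain p q where p: "p \<in> span (set fs)" and qo: "\<And>z. z \<in> span (set fs) \<Longrightarrow> real_inner_class.orthogonal q z"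
      and wpq: "?w = p + q"
      using orthogonal_subspace_decomp_exists[of "set fs" ?w] by metis
    have qo': "\<And>z. z \<in> span (set fs) \<Longrightarrow> inner q z = 0 \<and> inner z q = 0"
      using qo by (simp add: real_inner_class.orthogonal_def inner_commute)
    have pq: "inner p q = 0" using qo' p by simp
    let ?fs = "fs @ [?w]"
    have gnew: "gram_det ?fs = gram_det fs * inner q q"
      unfolding wpq by (rule gram_det_snoc[OF d p]) (use qo' in \<open>auto intro: span_base\<close>)
    have norms: "(norm p)^2 + (norm q)^2 = 1"
    proof -
      have "(norm ?w)^2 = inner (p+q) (p+q)" using wpq by (simp add: power2_norm_eq_inner)
      also have "\<dots> = (norm p)^2 + (norm q)^2"
        by (simp add: inner_add_left inner_add_right pq inner_commute power2_norm_eq_inner)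
      finally show ?thesis using wn by simp
    qed
    define s2 where "s2 = inner q q"
    have s2n: "s2 = (norm q)^2" by (simp add: s2_def power2_norm_eq_inner)
    have s0: "0 \<le> s2" by (simp add: s2_def)
    have s1: "s2 \<le> 1" using norms s2n zero_le_power2[of "norm p"] by linarith
    have wnot: "?w \<notin> set fs" using False span_base by blast
    show ?thesis
    proof (intro exI[of _ ?fs] conjI ballI)
      show "distinct ?fs" using d wnot by simp
      show "set ?fs \<subseteq> v ` {1..Suc k}" using sub V'eq by auto
      show "independent (set ?fs)" using ind False wnot by (simp add: independent_insert)
      show "v ` {1..Suc k} \<subseteq> span (set ?fs)"
        using cov V'eq span_mono[of "set fs" "set ?fs"] by (auto intro: span_base)
      show "0 \<le> gram_det ?fs" using gnew g0 s0 s2_def by simp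
      show "gram_det ?fs \<le> 1" using gnew g0 g1 s0 s1 s2_def by (simp add: mult_le_one)
      fix y assume "y \<in> span (v ` {1..Suc k})"
      then have "y \<in> span (insert ?w ?V)" using V'eq by simp
      then obtain lam where u0: "y - lam *\<^sub>R ?w \<in> span ?V" using span_breakdown_eq by blast
      define u where "u = y - lam *\<^sub>R ?w + lam *\<^sub>R p"
      have u: "u \<in> span (set fs)" unfolding u_def using u0 spV p by (simp add: span_add span_scale)
      have yuq: "y = u + lam *\<^sub>R q" unfolding u_def wpq by (simp add: algebra_simps)
      define a where "a = Qprod v k *v u"
      have a: "a \<in> span (set fs)" using Qsp[of u] u spV by (simp add: a_def)
      have Qq: "Qprod v k *v q = q"
        by (rule Qprod_fix) (use qo' cov in \<open>auto intro: span_base\<close>)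
      have Qy: "Qprod v k *v y = a + lam *\<^sub>R q" unfolding yuq a_def Qprod_linear Qq ..
      have IHu: "(norm a)^2 \<le> (1 - gram_det fs) * (norm u)^2" using IH u spV a_def by simp
      have aq: "inner a q = 0" "inner q a = 0" using qo' a by auto
      have uq: "inner u q = 0" "inner q u = 0" using qo' u by auto
      have nx: "(norm (a + lam *\<^sub>R q))^2 = (norm a)^2 + lam^2 * s2"
        unfolding power2_norm_eq_inner s2_def
        by (simp add: inner_add_left inner_add_right aq power2_eq_square)
      have ny: "(norm y)^2 = (norm u)^2 + lam^2 * s2"
        unfolding yuq power2_norm_eq_inner s2_def
        by (simp add: inner_add_left inner_add_right uq power2_eq_square)
      have wx: "inner ?w (a + lam *\<^sub>R q) = inner p a + lam * s2"
        unfolding wpq s2_def by (simp add: inner_add_left inner_add_right aq pq)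
      have CS: "(inner p a)^2 \<le> (1 - s2) * (norm a)^2"
      proof -
        have "(inner p a)^2 \<le> (norm p * norm a)^2"
          using Cauchy_Schwarz_ineq2[of p a] by (metis abs_ge_zero power2_abs power_mono)
        also have "\<dots> = (1 - s2) * (norm a)^2" using norms s2n by (simp add: power_mult_distrib)
        finally show ?thesis .
      qed
      have "(norm (Qprod v (Suc k) *v y))^2 = (norm a)^2 + lam^2 * s2 - (inner p a + lam * s2)^2"
        unfolding Qprod_Suc_apply Qy using P_norm2[OF wn, of "a + lam *\<^sub>R q"] nx wx by simp
      also have "\<dots> \<le> (1 - gram_det fs * s2) * ((norm u)^2 + lam^2 * s2)"
        by (rule scalar_key[OF g0 g1 s0 s1 _ _ IHu CS]) simp_all
      finally show "(norm (Qprod v (Suc k) *v y))^2 \<le> (1 - gram_det ?fs) * (norm y)^2"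
        using gnew ny s2_def by simp
    qed
  qed
qed


theorem mainTheorem9:
  fixes v :: "nat \<Rightarrow> real^'n" and k :: nat
  assumes unit: "\<And>i. i \<in> {1..k} \<Longrightarrow> norm (v i) = 1"
  shows "\<forall>y \<in> span (v ` {1..k}). norm y = 1 \<longrightarrow>
           norm (Qprod v k *v y)
             \<le> sqrt (1 - Min {gram_det fs | fs. max_indep_cols (v ` {1..k}) fs})"
proof (intro ballI impI)
  let ?V = "v ` {1..k}"
  let ?M = "{gram_det fs | fs. max_indep_cols ?V fs}"
  fix y assume y: "y \<in> span ?V" and y1: "norm y = 1"
  obtain fs where d: "distinct fs" and sub: "set fs \<subseteq> ?V" and ind: "independent (set fs)"
    and cov: "?V \<subseteq> span (set fs)"
    and B: "\<forall>y \<in> span ?V. (norm (Qprod v k *v y))^2 \<le> (1 - gram_det fs) * (norm y)^2"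
    using main_ind[of k v] unit by blast
  have dep: "\<forall>x\<in>?V. x \<notin> set fs \<longrightarrow> dependent (insert x (set fs))"
  proof (intro ballI impI)
    fix x assume "x \<in> ?V" "x \<notin> set fs"
    then have "x \<in> span (set fs)" using cov by blast
    then show "dependent (insert x (set fs))"
      using \<open>x \<notin> set fs\<close> independent_insert[of x "set fs"] by auto
  qed
  have mi: "max_indep_cols ?V fs"
    unfolding max_indep_cols_def using d sub ind dep by blast
  have fin: "finite ?M"
  proof -
    have "{fs. max_indep_cols ?V fs} \<subseteq> {xs. set xs \<subseteq> ?V \<and> length xs \<le> card ?V}"
    proof
      fix xs assume "xs \<in> {fs. max_indep_cols ?V fs}"
      then have m: "max_indep_cols ?V xs" by simp
      then have s: "set xs \<subseteq> ?V" by (simp add: max_indep_cols_def)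
      then have "card (set xs) \<le> card ?V" by (simp add: card_mono)
      then have "length xs \<le> card ?V" using m distinct_card by (fastforce simp: max_indep_cols_def)
      then show "xs \<in> {xs. set xs \<subseteq> ?V \<and> length xs \<le> card ?V}" using s by simp
    qed
    then have "finite {fs. max_indep_cols ?V fs}"
      by (rule finite_subset) (simp add: finite_lists_length_le)
    then have "finite (gram_det ` {fs. max_indep_cols ?V fs})" by simp
    moreover have "?M = gram_det ` {fs. max_indep_cols ?V fs}" by auto
    ultimately show ?thesis by simp
  qed
  have "Min ?M \<le> gram_det fs" using fin mi by (intro Min_le) auto
  then have "(norm (Qprod v k *v y))^2 \<le> 1 - Min ?M" using B y y1 by fastforce
  then show "norm (Qprod v k *v y) \<le> sqrt (1 - Min ?M)" by (rule real_le_rsqrt)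
qed

end
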